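(* Let $0<q<\infty$ and $\frac{q}{q+1}<p<\infty$, and let $r=\frac{pq}{pq+p-q}$. Then $$\frac{p\sin_{p,q}x}{x}+\frac{r\operatorname{tam}_{p,q}x}{x}>p+r \quad \text{for all } x\in\left(0,\tfrac{\pi_{p,q}}{2}\right),$$ and $$\frac{p\sinh_{p,q}x}{x}+\frac{r\operatorname{tamh}_{p,q}x}{x}>p+r \quad \text{for all } x\in\left(0,\tfrac{\pi_{r,q}}{2}\right).$$
   Context: For $0<q<\infty$ and $\frac{q}{q+1}<p<\infty$: let $F_{p,q}(y)=\int_0^y (1-t^q)^{-1/p}\,dt$ for $y\in[0,1)$ and $\pi_{p,q}=2\int_0^1(1-t^q)^{-1/p}\,dt\in(0,\infty]$ (it equals $\infty$ when $p\le 1$). The function $\sin_{p,q}:[0,\pi_{p,q}/2)\to[0,1)$ is the inverse of $F_{p,q}$, $\cos_{p,q}x=\frac{d}{dx}\sin_{p,q}x$, and $\operatorname{tam}_{p,q}x=\sin_{p,q}x/\cos_{p,q}^{p/q}x$. Let $G_{p,q}(y)=\int_0^y(1+t^q)^{-1/p}\,dt$ for $y\in[0,\infty)$; its range is $[0,\pi_{r,q}/2)$ with $r=\frac{pq}{pq+p-q}$ (which also satisfies $\frac{q}{q+1}<r<\infty$). The function $\sinh_{p,q}:[0,\pi_{r,q}/2)\to[0,\infty)$ is the inverse of $G_{p,q}$, $\cosh_{p,q}x=\frac{d}{dx}\sinh_{p,q}x$, and $\operatorname{tamh}_{p,q}x=\sinh_{p,q}x/\cosh_{p,q}^{p/q}x$.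 *)

theory Defs
  imports "HOL-Analysis.Analysis"
begin

definition F_pq :: "real \<Rightarrow> real \<Rightarrow> real \<Rightarrow> real" where
  "F_pq p q y = integral {0..y} (\<lambda>t. (1 - t powr q) powr (-1/p))"

text \<open>pi_{p,q} as an extended nonnegative real; it is infinite when the improper integral diverges.\<close>
definition pi_pq :: "real \<Rightarrow> real \<Rightarrow> ennreal" where
  "pi_pq p q = 2 * (\<integral>\<^sup>+ t. indicator {0..<1} t * ennreal ((1 - t powr q) powr (-1/p)) \<partial>lborel)"

definition sin_pq :: "real \<Rightarrow> real \<Rightarrow> real \<Rightarrow> real" where
  "sin_pq p q x = (THE y. 0 \<le> y \<and> y < 1 \<and> F_pq p q y = x)"

definition cos_pq :: "real \<Rightarrow> real \<Rightarrow> real \<Rightarrow> real" where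
  "cos_pq p q x = deriv (sin_pq p q) x"

definition tam_pq :: "real \<Rightarrow> real \<Rightarrow> real \<Rightarrow> real" where
  "tam_pq p q x = sin_pq p q x / (cos_pq p q x) powr (p/q)"

definition G_pq :: "real \<Rightarrow> real \<Rightarrow> real \<Rightarrow> real" where
  "G_pq p q y = integral {0..y} (\<lambda>t. (1 + t powr q) powr (-1/p))"

definition sinh_pq :: "real \<Rightarrow> real \<Rightarrow> real \<Rightarrow> real" where
  "sinh_pq p q x = (THE y. 0 \<le> y \<and> G_pq p q y = x)"

definition cosh_pq :: "real \<Rightarrow> real \<Rightarrow> real \<Rightarrow> real" where
  "cosh_pq p q x = deriv (sinh_pq p q) x"

definition tamh_pq :: "real \<Rightarrow> real \<Rightarrow> real \<Rightarrow> real" where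
  "tamh_pq p q x = sinh_pq p q x / (cosh_pq p q x) powr (p/q)"

end

theory Submission
  imports Defs
begin


lemma Phi_deriv:
  fixes g :: "real \<Rightarrow> real"
  assumes cont: "\<And>b. 0 \<le> b \<Longrightarrow> b < B \<Longrightarrow> continuous_on {0..b} g"
    and y: "0 < y" "y < B"
  shows "((\<lambda>y. integral {0..y} g) has_real_derivative g y) (at y)"
proof -
  define b where "b = (y + B) / 2"
  have "continuous_on {0..b} g" using cont y b_def by auto
  from integral_has_real_derivative[OF this, of y] y b_def
  show ?thesis by (simp add: at_within_Icc_at)
qed

lemma Phi_cont:
  fixes g :: "real \<Rightarrow> real"
  assumes cont: "\<And>b. 0 \<le> b \<Longrightarrow> b < B \<Longrightarrow> continuous_on {0..b} g"
    and b: "0 \<le> b" "b < B"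
  shows "continuous_on {0..b} (\<lambda>y. integral {0..y} g)"
  by (rule indefinite_integral_continuous_1, rule integrable_continuous_real, rule cont[OF b])

lemma Phi_mono:
  fixes g :: "real \<Rightarrow> real"
  assumes cont: "\<And>b. 0 \<le> b \<Longrightarrow> b < B \<Longrightarrow> continuous_on {0..b} g"
    and pos: "\<And>t. 0 \<le> t \<Longrightarrow> t < B \<Longrightarrow> 0 < g t"
    and ab: "0 \<le> a" "a < b" "b < B"
  shows "integral {0..a} g < integral {0..b} g"
proof -
  have c: "continuous_on {0..b} (\<lambda>y. integral {0..y} g)"
    using Phi_cont[where B=B and g=g and b=b, OF cont] ab by auto
  show ?thesis
  proof (rule DERIV_pos_imp_increasing_open[OF ab(2)])
    fix x assume "a < x" "x < b"
    then show "\<exists>y. ((\<lambda>y. integral {0..y} g) has_real_derivative y) (at x) \<and> 0 < y"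
      using Phi_deriv[where B=B and g=g and y=x, OF cont] pos[of x] ab by auto
  next
    show "continuous_on {a..b} (\<lambda>y. integral {0..y} g)"
      by (rule continuous_on_subset[OF c]) (use ab in auto)
  qed
qed

lemma Phi_inv_deriv:
  fixes g \<iota> :: "real \<Rightarrow> real"
  assumes cont: "\<And>b. 0 \<le> b \<Longrightarrow> b < B \<Longrightarrow> continuous_on {0..b} g"
    and pos: "\<And>t. 0 \<le> t \<Longrightarrow> t < B \<Longrightarrow> 0 < g t"
    and y0: "0 < y0" "y0 < B"
    and left: "\<And>y. 0 \<le> y \<Longrightarrow> y < B \<Longrightarrow> \<iota> (integral {0..y} g) = y"
  shows "(\<iota> has_real_derivative inverse (g y0)) (at (integral {0..y0} g))"
proof -
  define \<Phi> where "\<Phi> = (\<lambda>y. integral {0..y} g)"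
  define c where "c = (y0 + B) / 2"
  have c: "y0 < c" "c < B" using y0 c_def by auto
  have P0: "\<Phi> 0 = 0" by (simp add: \<Phi>_def)
  have ic: "isCont \<iota> (\<Phi> y0)"
  proof (rule isCont_inverse_function[where d = "min y0 (B - y0) / 2" and f = \<Phi> and x = y0])
    show "0 < min y0 (B - y0) / 2" using y0 by auto
  next
    fix z assume "\<bar>z - y0\<bar> \<le> min y0 (B - y0) / 2"
    then have z: "0 < z" "z < B" using y0 by (auto simp: abs_if split: if_splits)
    then show "\<iota> (\<Phi> z) = z" using left \<Phi>_def by auto
    show "isCont \<Phi> z" unfolding \<Phi>_def using Phi_deriv[OF cont z] by (rule DERIV_isCont)
  qed
  have "(\<iota> has_real_derivative inverse (g y0)) (at (\<Phi> y0))"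
  proof (rule DERIV_inverse_function[where a = 0 and b = "\<Phi> c" and f = \<Phi>])
    show "(\<Phi> has_real_derivative g y0) (at (\<iota> (\<Phi> y0)))"
      using left[of y0] y0 Phi_deriv[OF cont y0] \<Phi>_def by auto
    show "g y0 \<noteq> 0" using pos[of y0] y0 by auto
    show "0 < \<Phi> y0" using Phi_mono[where B=B and g=g and a=0 and b=y0, OF cont pos] y0 P0 \<Phi>_def by auto
    show "\<Phi> y0 < \<Phi> c" using Phi_mono[where B=B and g=g and a=y0 and b=c, OF cont pos] y0 c \<Phi>_def by auto
    show "isCont \<iota> (\<Phi> y0)" by (rule ic)
  next
    fix y assume yy: "0 < y" "y < \<Phi> c"
    have "continuous_on {0..c} \<Phi>" unfolding \<Phi>_def using Phi_cont[where B=B and g=g and b=c, OF cont] c y0 by auto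
    then obtain s where s: "0 \<le> s" "s \<le> c" "\<Phi> s = y"
      using IVT'[of \<Phi> 0 y c] yy P0 c y0 by auto
    then show "\<Phi> (\<iota> y) = y" using left[of s] c \<Phi>_def by auto
  qed
  then show ?thesis by (simp add: \<Phi>_def)
qed



lemma Phi_range:
  fixes g :: "real \<Rightarrow> real"
  assumes cont: "\<And>b. 0 \<le> b \<Longrightarrow> b < 1 \<Longrightarrow> continuous_on {0..b} g"
    and nonneg: "\<And>t. 0 \<le> t \<Longrightarrow> t < 1 \<Longrightarrow> 0 \<le> g t"
    and meas[measurable]: "g \<in> borel_measurable borel"
    and x: "0 \<le> x" "ennreal x < (\<integral>\<^sup>+ t. indicator {0..<1} t * ennreal (g t) \<partial>lborel)"
  shows "\<exists>y. 0 \<le> y \<and> y < 1 \<and> integral {0..y} g = x"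
proof -
  define b where "b = (\<lambda>n::nat. 1 - 1 / (real n + 2))"
  define A where "A = (\<lambda>n. {0 .. b n})"
  define M where "M = density lborel (\<lambda>t. ennreal (g t))"
  have b: "0 \<le> b n" "b n < 1" for n unfolding b_def by (auto simp: field_simps)
  have sM: "sets M = sets lborel" unfolding M_def by simp
  have eA: "emeasure M (A n) = ennreal (integral {0..b n} g)" for n
  proof -
    have "emeasure M (A n) = (\<integral>\<^sup>+ t. ennreal (g t) * indicator (A n) t \<partial>lborel)"
      unfolding M_def A_def by (rule emeasure_density) auto
    also have "\<dots> = ennreal (integral {0..b n} g)"
      unfolding A_def
    proof (rule nn_integral_has_integral_lebesgue')
      show "0 \<le> g t" if "t \<in> {0..b n}" for t using nonneg that b[of n] by auto
      show "(g has_integral integral {0..b n} g) {0..b n}"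
        using cont[OF b(1) b(2)] by (simp add: integrable_continuous_real integrable_integral)
    qed
    finally show ?thesis .
  qed
  have U: "(\<Union>n. A n) = {0..<1}"
  proof safe
    fix t n assume "t \<in> A n" then show "t \<in> {0..<1}" using b[of n] unfolding A_def by auto
  next
    fix t :: real assume t: "t \<in> {0..<1}"
    obtain n :: nat where n: "1 / (1 - t) < real n" using reals_Archimedean2 by blast
    have "1 / (real n + 2) \<le> 1 - t"
    proof -
      have "1 / (1 - t) \<le> real n + 2" using n by auto
      then show ?thesis using t by (auto simp: field_simps)
    qed
    then have "t \<in> A n" using t unfolding A_def b_def by auto
    then show "t \<in> (\<Union>n. A n)" by blast
  qed
  have inc: "incseq A"
  proof (rule incseq_SucI)
    fix n
    have "b n \<le> b (Suc n)" unfolding b_def by (auto simp: field_simps)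
    then show "A n \<subseteq> A (Suc n)" unfolding A_def by auto
  qed
  have rA: "range A \<subseteq> sets M" unfolding sM by (auto simp: A_def)
  have "(SUP n. emeasure M (A n)) = emeasure M (\<Union>n. A n)"
    by (rule SUP_emeasure_incseq[OF rA inc])
  also have "\<dots> = (\<integral>\<^sup>+ t. indicator {0..<1} t * ennreal (g t) \<partial>lborel)"
    unfolding U M_def by (subst emeasure_density) (auto simp: mult.commute)
  finally have "ennreal x < (SUP n. emeasure M (A n))" using x by simp
  then obtain n where "ennreal x < emeasure M (A n)" by (auto simp: less_SUP_iff)
  then have xl: "x < integral {0..b n} g" using eA x by (simp add: ennreal_less_iff)
  have c: "continuous_on {0..b n} (\<lambda>y. integral {0..y} g)"
    using Phi_cont[where B=1 and g=g and b="b n", OF cont] b by auto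
  obtain y where "0 \<le> y" "y \<le> b n" "integral {0..y} g = x"
    using IVT'[of "\<lambda>y. integral {0..y} g" 0 x "b n", OF _ _ _ c] xl x b by auto
  then show ?thesis using b[of n] by (intro exI[of _ y]) auto
qed



lemma bern:
  fixes v w :: real
  assumes w: "0 < w" "w < 1" and v: "0 < v" "v \<noteq> 1"
  shows "v powr w < 1 + w * (v - 1)"
proof -
  define \<phi> where "\<phi> = (\<lambda>z::real. 1 + w * (z - 1) - z powr w)"
  have d: "(\<phi> has_real_derivative (w - w * z powr (w - 1))) (at z)" if "0 < z" for z
    unfolding \<phi>_def using that
    by (auto intro!: derivative_eq_intros has_real_derivative_powr)
  have c: "continuous_on {a..b} \<phi>" if "0 < a" for a b
    unfolding \<phi>_def using that by (auto intro!: continuous_intros)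
  have p1: "\<phi> 1 = 0" unfolding \<phi>_def by simp
  show ?thesis
  proof (cases "v > 1")
    case True
    have "\<phi> 1 < \<phi> v"
    proof (rule DERIV_pos_imp_increasing_open[OF True _ c])
      fix z assume z: "1 < z" "z < v"
      have "z powr (w - 1) < 1" using z w by (intro powr_less_one) auto
      then have "0 < w - w * z powr (w - 1)" using w by (simp add: algebra_simps)
      then show "\<exists>y. (\<phi> has_real_derivative y) (at z) \<and> 0 < y" using d[of z] z by auto
    qed simp
    then show ?thesis using p1 unfolding \<phi>_def by simp
  next
    case False
    then have v1: "v < 1" using v by auto
    have "\<phi> v > \<phi> 1"
    proof (rule DERIV_neg_imp_decreasing_open[OF v1 _ c])
      fix z assume z: "v < z" "z < 1"
      have zp: "0 < z" using z v by auto
      have "z powr (1 - w) < 1" using zp z w by (simp add: powr01_less_one)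
      moreover have "z powr (w - 1) = inverse (z powr (1 - w))"
        by (metis minus_diff_eq powr_minus)
      ultimately have "1 < z powr (w - 1)" using zp
        by (simp add: one_less_inverse)
      then have "w - w * z powr (w - 1) < 0" using w
        by (metis diff_less_0_iff_less mult.right_neutral mult_strict_left_mono)
      then show "\<exists>y. (\<phi> has_real_derivative y) (at z) \<and> y < 0" using d[of z] zp by auto
    qed (use v in auto)
    then show ?thesis using p1 unfolding \<phi>_def by simp
  qed
qed

lemma amgm:
  fixes p q r u :: real
  assumes q: "0 < q" and p: "q / (q + 1) < p" and r: "r = p * q / (p * q + p - q)"
    and u: "0 < u" "u \<noteq> 1"
  shows "(p + r) * u powr (-1/p) < p + r * u powr (-1/q - 1)"
proof -
  have pq: "q < p * (q + 1)" using p q by (simp add: field_simps)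
  have p0: "0 < p" using pq q by (smt (verit) mult_nonpos_nonneg)
  have den: "0 < p * q + p - q" using pq by (simp add: algebra_simps)
  have r0: "0 < r" using r den p0 q by simp
  define w where "w = r / (p + r)"
  have w: "0 < w" "w < 1" using r0 p0 unfolding w_def by auto
  have pr: "p + r = p * p * (q + 1) / (p * q + p - q)"
    unfolding r using den by (simp add: field_simps)
  have wq: "w = q / (p * (q + 1))"
  proof -
    define D where "D = p * q + p - q"
    have D: "0 < D" using den D_def by simp
    have "w = r / (p * p * (q + 1) / D)" unfolding w_def pr D_def ..
    also have "\<dots> = (p * q / D) / (p * p * (q + 1) / D)" unfolding r D_def ..
    also have "\<dots> = (p * q) / (p * (p * (q + 1)))" using D by (simp add: mult.assoc)
    also have "\<dots> = q / (p * (q + 1))" using p0 by simp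
    finally show ?thesis .
  qed
  define v where "v = u powr (-1/q - 1)"
  have v0: "0 < v" using u unfolding v_def by simp
  have v1: "v \<noteq> 1"
  proof
    assume "v = 1"
    then have "ln v = 0" by simp
    moreover have "ln v = (-1/q - 1) * ln u" using u unfolding v_def by (simp add: ln_powr)
    moreover have "-1/q - 1 \<noteq> 0"
    proof -
      have "-1 / q < 0" using q by (simp add: divide_neg_pos)
      then show ?thesis by linarith
    qed
    moreover have "ln u \<noteq> 0" using u by simp
    ultimately show False by simp
  qed
  have vw: "v powr w = u powr (-1/p)"
  proof -
    have q1: "q + 1 \<noteq> 0" using q by simp
    have e1: "-1/q - 1 = -((q+1)/q)" using q by (simp add: field_simps)
    have "(-1/q - 1) * w = -((q+1)/q) * (q/(p*(q+1)))" unfolding wq e1 ..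
    also have "\<dots> = -1/p"
    proof -
      have "0 < p * q + p * (q * q)" using q p0 by (simp add: add_pos_pos)
      then show ?thesis using q p0 q1 by (simp add: field_simps)
    qed
    finally have "(-1/q - 1) * w = -1/p" .
    then show ?thesis unfolding v_def by (simp add: powr_powr)
  qed
  have "v powr w < 1 + w * (v - 1)" by (rule bern[OF w v0 v1])
  then have "(p + r) * v powr w < (p + r) * (1 + w * (v - 1))"
    using p0 r0 by simp
  also have "(p + r) * (1 + w * (v - 1)) = p + r * v"
    unfolding w_def using p0 r0 by (simp add: field_simps)
  finally show ?thesis using vw unfolding v_def by simp
qed



lemma tau_deriv:
  fixes q e y :: real
  assumes q: "0 < q" and y: "0 < y" and u: "0 < 1 + e * y powr q"
  shows "((\<lambda>y. y * (1 + e * y powr q) powr (-1/q)) has_real_derivative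
           (1 + e * y powr q) powr (-1/q - 1)) (at y)"
proof -
  define U where "U = 1 + e * y powr q"
  define A where "A = U powr (-1/q - 1)"
  have d1: "((\<lambda>y. 1 + e * y powr q) has_real_derivative e * (q * y powr (q - 1))) (at y)"
    using y by (auto intro!: derivative_eq_intros has_real_derivative_powr)
  have d2: "((\<lambda>z. z powr (-1/q)) has_real_derivative (-1/q) * U powr (-1/q - 1)) (at U)"
    using u U_def by (intro has_real_derivative_powr) simp
  have d3: "((\<lambda>x. (1 + e * x powr q) powr (-1/q)) has_real_derivative
              (-1/q) * U powr (-1/q - 1) * (e * (q * y powr (q - 1)))) (at y)"
    using DERIV_chain2[OF d2[unfolded U_def] d1] unfolding U_def by simp
  note d4 = DERIV_mult[OF DERIV_ident d3]
  have yy: "y powr (q - 1) * y = y powr q"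
    using powr_mult_base[of y "q - 1"] y by (simp add: mult.commute)
  have uu: "U powr (-1/q) = A * U"
  proof -
    have U0: "0 \<le> U" using u U_def by simp
    have "U * U powr (-1/q - 1) = U powr (1 + (-1/q - 1))" by (rule powr_mult_base[OF U0])
    then show ?thesis unfolding A_def by (simp add: mult.commute)
  qed
  have "1 * U powr (-1/q) + (-1/q) * U powr (-1/q - 1) * (e * (q * y powr (q - 1))) * y
        = A * U - A * e * (y powr (q - 1) * y)"
    unfolding uu A_def using q by (simp add: field_simps)
  also have "\<dots> = A" unfolding yy U_def by (simp add: algebra_simps)
  finally have "1 * U powr (-1/q) + (-1/q) * U powr (-1/q - 1) * (e * (q * y powr (q - 1))) * y = A" .
  with d4 show ?thesis unfolding A_def U_def by simp
qed



lemma g1_lt1: fixes q t :: real assumes "0 < q" "0 \<le> t" "t < 1" shows "t powr q < 1"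
  using assms by (cases "t = 0") (auto simp: powr01_less_one)

lemma g1_cont:
  fixes p q b :: real
  assumes q: "0 < q" and b: "0 \<le> b" "b < 1"
  shows "continuous_on {0..b} (\<lambda>t. (1 - t powr q) powr (-1/p))"
proof -
  have c1: "continuous_on {0..b} (\<lambda>t. t powr q)"
    by (rule continuous_on_powr') (use q in \<open>auto intro!: continuous_intros\<close>)
  show ?thesis
  proof (rule continuous_on_powr')
    show "continuous_on {0..b} (\<lambda>t. 1 - t powr q)" using c1 by (auto intro!: continuous_intros)
    show "\<forall>t\<in>{0..b}. 0 \<le> 1 - t powr q \<and> (1 - t powr q = 0 \<longrightarrow> 0 < -1/p)"
      using g1_lt1[OF q] b by force
  qed (auto intro!: continuous_intros)
qed

lemma g2_cont:
  fixes p q b :: real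
  assumes q: "0 < q"
  shows "continuous_on {0..b} (\<lambda>t. (1 + t powr q) powr (-1/p))"
proof -
  have c1: "continuous_on {0..b} (\<lambda>t. t powr q)"
    by (rule continuous_on_powr') (use q in \<open>auto intro!: continuous_intros\<close>)
  show ?thesis
  proof (rule continuous_on_powr')
    show "continuous_on {0..b} (\<lambda>t. 1 + t powr q)" using c1 by (auto intro!: continuous_intros)
    have "0 < 1 + t powr q" for t :: real by (simp add: add_pos_nonneg)
    then show "\<forall>t\<in>{0..b}. 0 \<le> 1 + t powr q \<and> (1 + t powr q = 0 \<longrightarrow> 0 < -1/p)"
      by (metis less_le)
  qed (auto intro!: continuous_intros)
qed

lemma g1_meas: "(\<lambda>t::real. (1 - t powr q) powr (-1/p)) \<in> borel_measurable borel"
  by measurable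

lemma pi_half:
  "pi_pq p q / 2 = (\<integral>\<^sup>+ t. indicator {0..<1} t * ennreal ((1 - t powr q) powr (-1/p)) \<partial>lborel)"
  unfolding pi_pq_def by (subst mult.commute) (rule ennreal_mult_divide_eq; simp)



lemma F_left:
  fixes p q y :: real
  assumes q: "0 < q" and y: "0 \<le> y" "y < 1"
  shows "sin_pq p q (F_pq p q y) = y"
proof -
  let ?g = "\<lambda>t. (1 - t powr q) powr (-1/p)"
  have cont: "\<And>b. 0 \<le> b \<Longrightarrow> b < 1 \<Longrightarrow> continuous_on {0..b} ?g" using g1_cont[OF q] by blast
  have pos: "0 < ?g t" if "0 \<le> t" "t < 1" for t
  proof -
    have "t powr q < 1" using g1_lt1[OF q that] .
    then have "0 < 1 - t powr q" by simp
    then show ?thesis by simp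
  qed
  show ?thesis unfolding sin_pq_def
  proof (rule the_equality)
    show "0 \<le> y \<and> y < 1 \<and> F_pq p q y = F_pq p q y" using y by simp
  next
    fix z assume z: "0 \<le> z \<and> z < 1 \<and> F_pq p q z = F_pq p q y"
    show "z = y"
    proof (rule ccontr)
      assume "z \<noteq> y"
      then consider "z < y" | "y < z" by linarith
      then show False
      proof cases
        case 1
        then show False using Phi_mono[where B=1 and g="?g" and a=z and b=y, OF cont pos] z y
          unfolding F_pq_def by auto
      next
        case 2
        then show False using Phi_mono[where B=1 and g="?g" and a=y and b=z, OF cont pos] z y
          unfolding F_pq_def by auto
      qed
    qed
  qed
qed

lemma h1_ineq:
  fixes p q r y0 :: real
  assumes q: "0 < q" and p: "q / (q + 1) < p" and r: "r = p * q / (p * q + p - q)"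
    and y0: "0 < y0" "y0 < 1"
  shows "(p + r) * F_pq p q y0 < p * y0 + r * (y0 * (1 - y0 powr q) powr (-1/q))"
proof -
  let ?g = "\<lambda>t. (1 - t powr q) powr (-1/p)"
  have cont: "\<And>b. 0 \<le> b \<Longrightarrow> b < 1 \<Longrightarrow> continuous_on {0..b} ?g" using g1_cont[OF q] by blast
  define h where "h = (\<lambda>y. p * y + r * (y * (1 - y powr q) powr (-1/q)) - (p + r) * F_pq p q y)"
  have h0: "h 0 = 0" unfolding h_def F_pq_def by simp
  have "h 0 < h y0"
  proof (rule DERIV_pos_imp_increasing_open[OF y0(1)])
    fix z assume z: "0 < z" "z < y0"
    have zq: "0 < z powr q" "z powr q < 1" using z y0 g1_lt1[OF q, of z] by auto
    have dt: "((\<lambda>y. y * (1 - y powr q) powr (-1/q)) has_real_derivative (1 - z powr q) powr (-1/q - 1)) (at z)"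
      using tau_deriv[OF q z(1), of "-1"] zq by simp
    have dF: "(F_pq p q has_real_derivative ?g z) (at z)"
      unfolding F_pq_def using Phi_deriv[where B=1 and g="?g" and y=z, OF cont] z y0 by auto
    have dh: "(h has_real_derivative (p * 1 + r * (1 - z powr q) powr (-1/q - 1) - (p + r) * ?g z)) (at z)"
      unfolding h_def
      by (intro DERIV_diff DERIV_add DERIV_cmult dt dF DERIV_ident)
    have "(p + r) * ?g z < p + r * (1 - z powr q) powr (-1/q - 1)"
      by (rule amgm[OF q p r]) (use zq in auto)
    then show "\<exists>y. (h has_real_derivative y) (at z) \<and> 0 < y" using dh by (intro exI[of _ "p * 1 + r * (1 - z powr q) powr (-1/q - 1) - (p + r) * ?g z"]) auto
  next
    have c1: "continuous_on {0..y0} (\<lambda>t. t powr q)"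
      by (rule continuous_on_powr') (use q in \<open>auto intro!: continuous_intros\<close>)
    have c2: "continuous_on {0..y0} (\<lambda>y. (1 - y powr q) powr (-1/q))"
      using g1_cont[OF q, of y0 q] y0 by simp
    have c3: "continuous_on {0..y0} (F_pq p q)"
      unfolding F_pq_def using Phi_cont[where B=1 and g="?g" and b=y0, OF cont] y0 by auto
    show "continuous_on {0..y0} h" unfolding h_def
      by (intro continuous_intros c2 c3)
  qed
  then have "0 < h y0" using h0 by simp
  then show ?thesis unfolding h_def by linarith
qed



lemma part1:
  fixes p q r x :: real
  assumes q: "0 < q" and p: "q / (q + 1) < p" and r: "r = p * q / (p * q + p - q)"
    and x: "0 < x" "ennreal x < pi_pq p q / 2"
  shows "p * sin_pq p q x / x + r * tam_pq p q x / x > p + r"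
proof -
  let ?g = "\<lambda>t. (1 - t powr q) powr (-1/p)"
  have cont: "\<And>b. 0 \<le> b \<Longrightarrow> b < 1 \<Longrightarrow> continuous_on {0..b} ?g" using g1_cont[OF q] by blast
  have pos: "0 < ?g t" if "0 \<le> t" "t < 1" for t
  proof -
    have "t powr q < 1" using g1_lt1[OF q that] .
    then have "0 < 1 - t powr q" by simp
    then show ?thesis by simp
  qed
  obtain y0 where y0: "0 \<le> y0" "y0 < 1" "F_pq p q y0 = x"
    using Phi_range[where g="?g" and x=x, OF cont _ g1_meas] pos x pi_half[of p q]
    unfolding F_pq_def by (auto simp: less_imp_le)
  have y0p: "0 < y0" using y0 x unfolding F_pq_def by (cases "y0 = 0") auto
  have sinx: "sin_pq p q x = y0" using F_left[where p=p, OF q y0(1,2)] y0(3) by simp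
  have d: "(sin_pq p q has_real_derivative inverse (?g y0)) (at (integral {0..y0} ?g))"
    by (rule Phi_inv_deriv[where B=1, OF cont pos y0p y0(2)])
       (use F_left[where p=p, OF q] in \<open>auto simp: F_pq_def\<close>)
  define U where "U = 1 - y0 powr q"
  have U: "0 < U" using g1_lt1[OF q y0(1,2)] U_def by simp
  have cosx: "cos_pq p q x = U powr (1/p)"
    unfolding cos_pq_def using DERIV_imp_deriv[OF d] y0(3) U
    by (simp add: F_pq_def U_def powr_minus[symmetric])
  have p0: "0 < p"
  proof -
    have "0 < q / (q + 1)" using q by simp
    then show ?thesis using p by linarith
  qed
  have e: "inverse p * (p * inverse q) = inverse q" using p0 by simp
  have tamx: "tam_pq p q x = y0 * U powr (-1/q)"
    unfolding tam_pq_def sinx cosx using U p0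
    by (simp add: powr_powr powr_minus divide_inverse e)
  have key: "(p + r) * x < p * y0 + r * (y0 * U powr (-1/q))"
    using h1_ineq[OF q p r y0p y0(2)] y0(3) U_def by simp
  have "p * sin_pq p q x / x + r * tam_pq p q x / x = (p * y0 + r * (y0 * U powr (-1/q))) / x"
    unfolding sinx tamx by (simp add: add_divide_distrib)
  also have "\<dots> > p + r" using key x(1) by (simp add: field_simps)
  finally show ?thesis .
qed



lemma powq_aux:
  fixes q t e :: real
  assumes q: "0 < q" and t: "0 \<le> t" and u: "0 < 1 + e * t powr q"
  shows "(t * (1 + e * t powr q) powr (-1/q)) powr q = t powr q / (1 + e * t powr q)"
proof -
  have "(t * (1 + e * t powr q) powr (-1/q)) powr q = t powr q * ((1 + e * t powr q) powr (-1/q)) powr q"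
    using t by (simp add: powr_mult)
  also have "((1 + e * t powr q) powr (-1/q)) powr q = (1 + e * t powr q) powr (-1)"
    using q by (simp add: powr_powr)
  also have "\<dots> = inverse (1 + e * t powr q)" using u by (simp add: powr_minus)
  finally show ?thesis by (simp add: divide_inverse)
qed

lemma sigma_mono:
  fixes q a b :: real
  assumes q: "0 < q" and ab: "0 \<le> a" "a < b"
  shows "a * (1 + a powr q) powr (-1/q) < b * (1 + b powr q) powr (-1/q)"
proof -
  define \<sigma> where "\<sigma> = (\<lambda>t::real. t * (1 + t powr q) powr (-1/q))"
  have "\<sigma> a < \<sigma> b"
  proof (rule DERIV_pos_imp_increasing_open[OF ab(2)])
    fix z assume z: "a < z" "z < b"
    have zp: "0 < z" using z ab by auto
    have u: "0 < 1 + 1 * z powr q" by (simp add: add_pos_nonneg)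
    have "(\<sigma> has_real_derivative (1 + z powr q) powr (-1/q - 1)) (at z)"
      using tau_deriv[OF q zp u] unfolding \<sigma>_def by simp
    moreover have "0 < (1 + z powr q) powr (-1/q - 1)" using u by simp
    ultimately show "\<exists>y. (\<sigma> has_real_derivative y) (at z) \<and> 0 < y" by blast
  next
    have c1: "continuous_on {a..b} (\<lambda>t. t powr q)"
      by (rule continuous_on_powr') (use q ab in \<open>auto intro!: continuous_intros\<close>)
    have "continuous_on {a..b} (\<lambda>t. (1 + t powr q) powr (-1/q))"
    proof (rule continuous_on_powr')
      show "continuous_on {a..b} (\<lambda>t. 1 + t powr q)" using c1 by (auto intro!: continuous_intros)
      have "0 < 1 + t powr q" for t :: real by (simp add: add_pos_nonneg)
      then show "\<forall>t\<in>{a..b}. 0 \<le> 1 + t powr q \<and> (1 + t powr q = 0 \<longrightarrow> 0 < -1/q)"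
        by (metis less_le)
    qed (auto intro!: continuous_intros)
    then show "continuous_on {a..b} \<sigma>" unfolding \<sigma>_def by (rule continuous_on_mult[OF continuous_on_id])
  qed
  then show ?thesis unfolding \<sigma>_def .
qed



lemma sigma_cont:
  fixes q a b :: real
  assumes q: "0 < q" and a: "0 \<le> a"
  shows "continuous_on {a..b} (\<lambda>t. t * (1 + t powr q) powr (-1/q))"
proof -
  have c1: "continuous_on {a..b} (\<lambda>t. t powr q)"
    by (rule continuous_on_powr') (use q a in \<open>auto intro!: continuous_intros\<close>)
  have "continuous_on {a..b} (\<lambda>t. (1 + t powr q) powr (-1/q))"
  proof (rule continuous_on_powr')
    show "continuous_on {a..b} (\<lambda>t. 1 + t powr q)" using c1 by (auto intro!: continuous_intros)
    have "0 < 1 + t powr q" for t :: real by (simp add: add_pos_nonneg)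
    then show "\<forall>t\<in>{a..b}. 0 \<le> 1 + t powr q \<and> (1 + t powr q = 0 \<longrightarrow> 0 < -1/q)"
      by (metis less_le)
  qed (auto intro!: continuous_intros)
  then show ?thesis by (rule continuous_on_mult[OF continuous_on_id])
qed

lemma sigma_t0:
  fixes q s :: real
  assumes q: "0 < q" and s: "0 \<le> s" "s < 1"
  defines "t0 \<equiv> s * (1 - s powr q) powr (-1/q)"
  shows "t0 * (1 + t0 powr q) powr (-1/q) = s"
proof -
  define S where "S = s powr q"
  have S: "0 \<le> S" "S < 1" using g1_lt1[OF q s] S_def by auto
  have t0q: "t0 powr q = S / (1 - S)"
    using powq_aux[OF q s(1), of "-1"] S unfolding t0_def S_def by simp
  have e: "1 + t0 powr q = (1 - S) powr (-1)"
    unfolding t0q using S by (simp add: powr_minus field_simps)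
  have "(1 + t0 powr q) powr (-1/q) = (1 - S) powr ((-1) * (-1/q))"
    unfolding e by (rule powr_powr)
  then have "(1 + t0 powr q) powr (-1/q) = (1 - S) powr (1/q)" by simp
  then have "t0 * (1 + t0 powr q) powr (-1/q) = s * ((1 - S) powr (-1/q) * (1 - S) powr (1/q))"
    unfolding t0_def S_def by simp
  also have "(1 - S) powr (-1/q) * (1 - S) powr (1/q) = 1"
    using S by (simp add: powr_add[symmetric])
  finally show ?thesis by simp
qed



lemma params:
  fixes p q r :: real
  assumes q: "0 < q" and p: "q / (q + 1) < p" and r: "r = p * q / (p * q + p - q)"
  shows "0 < p" "0 < r" "1/r - 1/q - 1 = -1/p"
proof -
  have pq: "q < p * (q + 1)" using p q by (simp add: field_simps)
  show p0: "0 < p" using pq q by (smt (verit) mult_nonpos_nonneg)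
  have den: "0 < p * q + p - q" using pq by (simp add: algebra_simps)
  show "0 < r" using r den p0 q by simp
  have "1/r = (p * q + p - q) / (p * q)" using r den p0 q by simp
  also have "\<dots> = 1 + 1/q - 1/p" using p0 q by (simp add: field_simps)
  finally show "1/r - 1/q - 1 = -1/p" by simp
qed

lemma g2_pos: "0 < (1 + t powr q) powr (-1/p :: real)"
proof -
  have "0 < 1 + t powr q" by (simp add: add_pos_nonneg)
  then show ?thesis by simp
qed

lemma link:
  fixes p q r s0 :: real
  assumes q: "0 < q" and p: "q / (q + 1) < p" and r: "r = p * q / (p * q + p - q)"
    and s0: "0 < s0" "s0 < 1"
  defines "t0 \<equiv> s0 * (1 - s0 powr q) powr (-1/q)"
  shows "G_pq p q t0 = F_pq r q s0" and "0 < t0"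
proof -
  note pr = params[OF q p r]
  define \<sigma> where "\<sigma> = (\<lambda>t::real. t * (1 + t powr q) powr (-1/q))"
  let ?g1 = "\<lambda>t. (1 - t powr q) powr (-1/r)"
  let ?g2 = "\<lambda>t. (1 + t powr q) powr (-1/p)"
  have S: "s0 powr q < 1" using g1_lt1[OF q] s0 by auto
  have "0 < 1 - s0 powr q" using S by simp
  then have "0 < (1 - s0 powr q) powr (-1/q)" by simp
  then show t0p: "0 < t0" unfolding t0_def using s0 by simp
  have st0: "\<sigma> t0 = s0" unfolding \<sigma>_def t0_def by (rule sigma_t0[OF q]) (use s0 in auto)
  have cont1: "\<And>b. 0 \<le> b \<Longrightarrow> b < 1 \<Longrightarrow> continuous_on {0..b} ?g1" using g1_cont[OF q] by blast
  have cont2: "\<And>b. 0 \<le> b \<Longrightarrow> b < t0 + 1 \<Longrightarrow> continuous_on {0..b} ?g2" using g2_cont[OF q] by blast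
  have sig_rng: "0 \<le> \<sigma> t \<and> \<sigma> t \<le> s0" if "0 \<le> t" "t \<le> t0" for t
  proof -
    have "0 \<le> \<sigma> t" unfolding \<sigma>_def using that by simp
    moreover have "\<sigma> t \<le> s0"
    proof (cases "t = t0")
      case True then show ?thesis using st0 by simp
    next
      case False
      then have "\<sigma> t < \<sigma> t0" unfolding \<sigma>_def using sigma_mono[OF q, of t t0] that by simp
      then show ?thesis using st0 by simp
    qed
    ultimately show ?thesis by simp
  qed
  define D where "D = (\<lambda>t. G_pq p q t - F_pq r q (\<sigma> t))"
  have "D t0 = D 0"
  proof (rule DERIV_isconst_end[OF t0p])
    have cG: "continuous_on {0..t0} (G_pq p q)"
      unfolding G_pq_def using Phi_cont[where B="t0+1" and g="?g2" and b=t0, OF cont2] t0p by simp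
    have cF: "continuous_on {0..s0} (F_pq r q)"
      unfolding F_pq_def using Phi_cont[where B="1" and g="?g1" and b=s0, OF cont1] s0 by simp
    have cs: "continuous_on {0..t0} \<sigma>" unfolding \<sigma>_def by (rule sigma_cont[OF q]) simp
    have "continuous_on {0..t0} (\<lambda>t. F_pq r q (\<sigma> t))"
      by (rule continuous_on_compose2[OF cF cs]) (use sig_rng in auto)
    then show "continuous_on {0..t0} D" unfolding D_def by (intro continuous_on_diff cG)
  next
    fix t assume t: "0 < t" "t < t0"
    define T where "T = t powr q"
    have T: "0 < T" unfolding T_def using t by simp
    have sr: "0 < \<sigma> t" "\<sigma> t < s0"
    proof -
      have "0 < 1 + t powr q" by (simp add: add_pos_nonneg)
      then have "0 < (1 + t powr q) powr (-1/q)" by simp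
      then show "0 < \<sigma> t" unfolding \<sigma>_def using t by simp
      show "\<sigma> t < s0" using sigma_mono[OF q, of t t0] t st0 unfolding \<sigma>_def by simp
    qed
    have dG: "(G_pq p q has_real_derivative ?g2 t) (at t)"
      unfolding G_pq_def using Phi_deriv[where B="t0+1" and g="?g2" and y=t, OF cont2] t by simp
    have u1: "0 < 1 + 1 * t powr q" by (simp add: add_pos_nonneg)
    have ds: "(\<sigma> has_real_derivative (1 + T) powr (-1/q - 1)) (at t)"
      using tau_deriv[OF q t(1) u1] unfolding \<sigma>_def T_def by simp
    have dF: "(F_pq r q has_real_derivative ?g1 (\<sigma> t)) (at (\<sigma> t))"
      unfolding F_pq_def using Phi_deriv[where B=1 and g="?g1" and y="\<sigma> t", OF cont1] sr s0 by simp
    note dc = DERIV_chain2[OF dF ds]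
    have sq: "\<sigma> t powr q = T / (1 + T)"
      using powq_aux[OF q, of t 1] t unfolding \<sigma>_def T_def by (simp add: add_pos_nonneg)
    have e1: "1 - \<sigma> t powr q = (1 + T) powr (-1)"
      unfolding sq using T by (simp add: powr_minus field_simps)
    have "?g1 (\<sigma> t) = (1 + T) powr ((-1) * (-1/r))" unfolding e1 by (rule powr_powr)
    then have "?g1 (\<sigma> t) * (1 + T) powr (-1/q - 1) = (1 + T) powr (1/r + (-1/q - 1))"
      using T by (simp add: powr_add)
    also have "1/r + (-1/q - 1) = -1/p" using pr(3) by simp
    finally have eq: "?g1 (\<sigma> t) * (1 + T) powr (-1/q - 1) = ?g2 t" unfolding T_def .
    have "(D has_real_derivative ?g2 t - ?g2 t) (at t)"
      unfolding D_def using DERIV_diff[OF dG dc] eq by simp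
    then show "(D has_real_derivative 0) (at t)" by simp
  qed
  moreover have "D 0 = 0" unfolding D_def \<sigma>_def G_pq_def F_pq_def by simp
  ultimately show "G_pq p q t0 = F_pq r q s0" unfolding D_def st0 by simp
qed



lemma h2_ineq:
  fixes p q r t0 :: real
  assumes q: "0 < q" and p: "q / (q + 1) < p" and r: "r = p * q / (p * q + p - q)"
    and t0: "0 < t0"
  shows "(p + r) * G_pq p q t0 < p * t0 + r * (t0 * (1 + t0 powr q) powr (-1/q))"
proof -
  let ?g = "\<lambda>t. (1 + t powr q) powr (-1/p)"
  have cont: "\<And>b. 0 \<le> b \<Longrightarrow> b < t0 + 1 \<Longrightarrow> continuous_on {0..b} ?g" using g2_cont[OF q] by blast
  define h where "h = (\<lambda>y. p * y + r * (y * (1 + y powr q) powr (-1/q)) - (p + r) * G_pq p q y)"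
  have h0: "h 0 = 0" unfolding h_def G_pq_def by simp
  have "h 0 < h t0"
  proof (rule DERIV_pos_imp_increasing_open[OF t0])
    fix z assume z: "0 < z" "z < t0"
    have zq: "0 < z powr q" using z by simp
    have u1: "0 < 1 + 1 * z powr q" by (simp add: add_pos_nonneg)
    have dt: "((\<lambda>y. y * (1 + y powr q) powr (-1/q)) has_real_derivative (1 + z powr q) powr (-1/q - 1)) (at z)"
      using tau_deriv[OF q z(1) u1] by simp
    have dF: "(G_pq p q has_real_derivative ?g z) (at z)"
      unfolding G_pq_def using Phi_deriv[where B="t0+1" and g="?g" and y=z, OF cont] z by auto
    have dh: "(h has_real_derivative (p * 1 + r * (1 + z powr q) powr (-1/q - 1) - (p + r) * ?g z)) (at z)"
      unfolding h_def
      by (intro DERIV_diff DERIV_add DERIV_cmult dt dF DERIV_ident)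
    have "(p + r) * ?g z < p + r * (1 + z powr q) powr (-1/q - 1)"
      by (rule amgm[OF q p r]) (use zq in \<open>auto simp: add_pos_nonneg\<close>)
    then show "\<exists>y. (h has_real_derivative y) (at z) \<and> 0 < y" using dh
      by (intro exI[of _ "p * 1 + r * (1 + z powr q) powr (-1/q - 1) - (p + r) * ?g z"]) auto
  next
    have c2: "continuous_on {0..t0} (\<lambda>y. y * (1 + y powr q) powr (-1/q))"
      by (rule sigma_cont[OF q]) simp
    have c3: "continuous_on {0..t0} (G_pq p q)"
      unfolding G_pq_def using Phi_cont[where B="t0+1" and g="?g" and b=t0, OF cont] t0 by auto
    show "continuous_on {0..t0} h" unfolding h_def
      by (intro continuous_on_diff continuous_on_add continuous_on_mult continuous_on_const c2 c3 continuous_on_id)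
  qed
  then have "0 < h t0" using h0 by simp
  then show ?thesis unfolding h_def by linarith
qed

lemma G_left:
  fixes p q y :: real
  assumes q: "0 < q" and y: "0 \<le> y"
  shows "sinh_pq p q (G_pq p q y) = y"
  unfolding sinh_pq_def
proof (rule the_equality)
  show "0 \<le> y \<and> G_pq p q y = G_pq p q y" using y by simp
next
  let ?g = "\<lambda>t. (1 + t powr q) powr (-1/p)"
  fix z assume z: "0 \<le> z \<and> G_pq p q z = G_pq p q y"
  define B where "B = max y z + 1"
  have cont: "\<And>b. 0 \<le> b \<Longrightarrow> b < B \<Longrightarrow> continuous_on {0..b} ?g" using g2_cont[OF q] by blast
  have pos: "\<And>t. 0 \<le> t \<Longrightarrow> t < B \<Longrightarrow> 0 < ?g t" using g2_pos by blast
  show "z = y"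
  proof (rule ccontr)
    assume "z \<noteq> y"
    then consider "z < y" | "y < z" by linarith
    then show False
    proof cases
      case 1
      then show False using Phi_mono[where B=B and g="?g" and a=z and b=y, OF cont pos] z y B_def
        unfolding G_pq_def by auto
    next
      case 2
      then show False using Phi_mono[where B=B and g="?g" and a=y and b=z, OF cont pos] z y B_def
        unfolding G_pq_def by auto
    qed
  qed
qed

lemma part2:
  fixes p q r x :: real
  assumes q: "0 < q" and p: "q / (q + 1) < p" and r: "r = p * q / (p * q + p - q)"
    and x: "0 < x" "ennreal x < pi_pq r q / 2"
  shows "p * sinh_pq p q x / x + r * tamh_pq p q x / x > p + r"
proof -
  note pr = params[OF q p r]
  let ?g1 = "\<lambda>t. (1 - t powr q) powr (-1/r)"
  let ?g = "\<lambda>t. (1 + t powr q) powr (-1/p)"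
  have cont1: "\<And>b. 0 \<le> b \<Longrightarrow> b < 1 \<Longrightarrow> continuous_on {0..b} ?g1" using g1_cont[OF q] by blast
  have pos1: "0 < ?g1 t" if "0 \<le> t" "t < 1" for t
  proof -
    have "t powr q < 1" using g1_lt1[OF q that] .
    then have "0 < 1 - t powr q" by simp
    then show ?thesis by simp
  qed
  obtain s0 where s0: "0 \<le> s0" "s0 < 1" "F_pq r q s0 = x"
    using Phi_range[where g="?g1" and x=x, OF cont1 _ g1_meas] pos1 x pi_half[of r q]
    unfolding F_pq_def by (auto simp: less_imp_le)
  have s0p: "0 < s0" using s0 x unfolding F_pq_def by (cases "s0 = 0") auto
  define t0 where "t0 = s0 * (1 - s0 powr q) powr (-1/q)"
  have Gt0: "G_pq p q t0 = x" and t0p: "0 < t0"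
    using link[OF q p r s0p s0(2)] s0(3) unfolding t0_def by auto
  have sinhx: "sinh_pq p q x = t0" using G_left[OF q, of t0 p] t0p Gt0 by simp
  have cont: "\<And>b. 0 \<le> b \<Longrightarrow> b < t0 + 1 \<Longrightarrow> continuous_on {0..b} ?g" using g2_cont[OF q] by blast
  have pos: "\<And>t. 0 \<le> t \<Longrightarrow> t < t0 + 1 \<Longrightarrow> 0 < ?g t" using g2_pos by blast
  have d: "(sinh_pq p q has_real_derivative inverse (?g t0)) (at (integral {0..t0} ?g))"
    by (rule Phi_inv_deriv[where B="t0+1", OF cont pos t0p])
       (use G_left[where p=p, OF q] in \<open>auto simp: G_pq_def\<close>)
  define U where "U = 1 + t0 powr q"
  have U: "0 < U" unfolding U_def by (simp add: add_pos_nonneg)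
  have coshx: "cosh_pq p q x = U powr (1/p)"
    unfolding cosh_pq_def using DERIV_imp_deriv[OF d] Gt0 U
    by (simp add: G_pq_def U_def powr_minus[symmetric])
  have e: "inverse p * (p * inverse q) = inverse q" using pr(1) by simp
  have tamhx: "tamh_pq p q x = t0 * U powr (-1/q)"
    unfolding tamh_pq_def sinhx coshx using U pr(1)
    by (simp add: powr_powr powr_minus divide_inverse e)
  have key: "(p + r) * x < p * t0 + r * (t0 * U powr (-1/q))"
    using h2_ineq[OF q p r t0p] Gt0 U_def by simp
  have "p * sinh_pq p q x / x + r * tamh_pq p q x / x = (p * t0 + r * (t0 * U powr (-1/q))) / x"
    unfolding sinhx tamhx by (simp add: add_divide_distrib)
  also have "\<dots> > p + r" using key x(1) by (simp add: field_simps)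
  finally show ?thesis .
qed

theorem theorem3p3:
  fixes p q r :: real
  assumes "0 < q" and "q / (q + 1) < p"
    and "r = p * q / (p * q + p - q)"
  shows "(\<forall>x. 0 < x \<and> ennreal x < pi_pq p q / 2 \<longrightarrow>
            p * sin_pq p q x / x + r * tam_pq p q x / x > p + r)
       \<and> (\<forall>x. 0 < x \<and> ennreal x < pi_pq r q / 2 \<longrightarrow>
            p * sinh_pq p q x / x + r * tamh_pq p q x / x > p + r)"
  using part1[OF assms] part2[OF assms] by blast

end
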